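(* Let $r>1$ and $0\le\theta\le\frac{\pi}{2}$. Then all four roots (counted with multiplicity) of the equation $$ re^{-i\theta}w^4-w^3+w-re^{i\theta}=0 $$ in the variable $w\in\mathbb{C}$ lie on the unit circle $\{w:|w|=1\}$. *)

theory Defs
  imports "HOL-Analysis.Analysis"
begin

end

theory Submission
  imports Defs
begin

lemma key_id:
  fixes a w :: complex
  shows "(cmod (cnj a * w - 1))^2 - (cmod (w - a))^2 = ((cmod a)^2 - 1) * ((cmod w)^2 - 1)"
  unfolding cmod_power2 by (simp add: algebra_simps power2_eq_square)

lemma main:
  fixes a w :: complex
  assumes a: "cmod a > 1" and eq: "cnj a * w ^ 4 - w ^ 3 + w - a = 0"
  shows "cmod w = 1"
proof -
  have "w ^ 3 * (cnj a * w - 1) = a - w" using eq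
    by (simp add: algebra_simps power_numeral_reduce)
  hence E: "cmod w ^ 3 * cmod (cnj a * w - 1) = cmod (w - a)"
    by (metis norm_minus_commute norm_mult norm_power)
  have a2: "(cmod a)^2 > 1" using a by (simp add: one_less_power)
  show ?thesis
  proof (rule ccontr)
    assume "cmod w \<noteq> 1"
    then consider "cmod w > 1" | "cmod w < 1" by linarith
    then show False
    proof cases
      case 1
      have "(cmod w)^2 > 1" using 1 by (simp add: one_less_power)
      hence "(cmod (cnj a * w - 1))^2 > (cmod (w - a))^2" using key_id[of a w] a2
        by (smt (verit) mult_pos_pos)
      hence lt: "cmod (cnj a * w - 1) > cmod (w - a)"
        by (simp add: power_less_imp_less_base)
      have "cmod w ^ 3 \<ge> 1" using 1 by (simp add: one_le_power)
      hence "cmod w ^ 3 * cmod (cnj a * w - 1) \<ge> cmod (cnj a * w - 1)"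
        by (simp add: mult_le_cancel_right1)
      then show False using E lt by linarith
    next
      case 2
      have "(cmod w)^2 < 1" using 2 by (simp add: power_less_one_iff)
      hence "(cmod (cnj a * w - 1))^2 < (cmod (w - a))^2" using key_id[of a w] a2
        by (smt (verit) mult_pos_neg)
      hence lt: "cmod (cnj a * w - 1) < cmod (w - a)"
        by (simp add: power_less_imp_less_base)
      have "cmod w ^ 3 \<le> 1" using 2 by (simp add: power_le_one)
      hence "cmod w ^ 3 * cmod (cnj a * w - 1) \<le> cmod (cnj a * w - 1)"
        by (simp add: mult_left_le_one_le)
      then show False using E lt by linarith
    qed
  qed
qed

theorem theorem3p3:
  fixes r \<theta> :: real and w :: complex
  assumes "r > 1" and "0 \<le> \<theta>" and "\<theta> \<le> pi / 2"
    and "complex_of_real r * exp (- \<i> * complex_of_real \<theta>) * w ^ 4 - w ^ 3 + w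
           - complex_of_real r * exp (\<i> * complex_of_real \<theta>) = 0"
  shows "norm w = 1"
proof -
  let ?a = "complex_of_real r * exp (\<i> * complex_of_real \<theta>)"
  have c: "cnj ?a = complex_of_real r * exp (- \<i> * complex_of_real \<theta>)"
    proof -
    have "cnj (exp (\<i> * complex_of_real \<theta>)) = exp (- \<i> * complex_of_real \<theta>)"
      by (simp add: exp_cnj)
    then show ?thesis by simp
  qed
  have n: "cmod ?a = r" using assms(1) by (simp add: norm_mult)
  show ?thesis using main[of ?a w] assms(1,4) c n by simp
qed

end
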